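(* A convex body $K\subset\mathbb{C}^n$ is symmetric if and only if some translated copy $K'$ of $K$ has the property that for every complex $1$-dimensional linear subspace $L\subset\mathbb{C}^n$, the orthogonal projection of $K'$ onto $L$ is a closed disk in $L$ centered at the origin.
   Context: A convex body is a compact convex subset of $\mathbb{C}^n$ with nonempty interior. $\mathbb{S}^1=\{\xi\in\mathbb{C}:|\xi|=1\}$. A set $A\subset\mathbb{C}^n$ is called symmetric if there is a translated copy $A'=A-x_0$ of $A$ such that $\xi A'=A'$ for every $\xi\in\mathbb{S}^1$; $x_0$ is then called the center of symmetry. Orthogonal projections are with respect to the standard Hermitian inner product on $\mathbb{C}^n$; a disk in a complex line is a closed Euclidean round disk in it. *)

theory Defs
  imports "HOL-Analysis.Analysis"
begin

definition convex_body :: "(complex ^ 'n) set \<Rightarrow> bool" where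
  "convex_body K \<longleftrightarrow> compact K \<and> convex K \<and> interior K \<noteq> {}"

definition hinner :: "complex ^ 'n \<Rightarrow> complex ^ 'n \<Rightarrow> complex" where
  "hinner x y = (\<Sum>i\<in>UNIV. x $ i * cnj (y $ i))"

definition csymmetric :: "(complex ^ 'n) set \<Rightarrow> bool" where
  "csymmetric A \<longleftrightarrow> (\<exists>x0. \<forall>\<xi>::complex. norm \<xi> = 1 \<longrightarrow>
      (\<lambda>x. \<xi> *s x) ` ((\<lambda>x. x - x0) ` A) = (\<lambda>x. x - x0) ` A)"

definition complex_line :: "(complex ^ 'n) set \<Rightarrow> bool" where
  "complex_line L \<longleftrightarrow> (\<exists>v. v \<noteq> 0 \<and> L = {c *s v | c. True})"

definition orth_proj :: "(complex ^ 'n) set \<Rightarrow> complex ^ 'n \<Rightarrow> complex ^ 'n" where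
  "orth_proj L x = (THE p. p \<in> L \<and> (\<forall>w\<in>L. hinner (x - p) w = 0))"

definition origin_disk_in :: "(complex ^ 'n) set \<Rightarrow> (complex ^ 'n) set \<Rightarrow> bool" where
  "origin_disk_in L D \<longleftrightarrow> (\<exists>r>0. D = {w \<in> L. norm w \<le> r})"

end

theory Submission
  imports Defs
begin

lemma hinner_add: "hinner (x + y) w = hinner x w + hinner y w"
  by (simp add: hinner_def sum.distrib algebra_simps)
lemma hinner_diff: "hinner (x - y) w = hinner x w - hinner y w"
  by (simp add: hinner_def sum_subtractf algebra_simps)
lemma hinner_smult: "hinner (c *s x) w = c * hinner x w"
  by (simp add: hinner_def sum_distrib_left algebra_simps)
lemma hinner_smult2: "hinner x (c *s w) = cnj c * hinner x w"
  by (simp add: hinner_def sum_distrib_left algebra_simps)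
lemma scaleR_comp: "(c *\<^sub>R x) $ i = of_real c * (x::complex^'n) $ i"
  by (rule trans[OF vector_scaleR_component], simp add: scaleR_conv_of_real)
lemma hinner_scaleR: "hinner (c *\<^sub>R x) w = of_real c * hinner x w"
  by (simp add: hinner_def sum_distrib_left algebra_simps scaleR_comp del: vector_scaleR_component)

lemma inner_hinner: "(x::complex^'n) \<bullet> y = Re (hinner x y)"
  by (simp add: hinner_def inner_vec_def inner_complex_def Re_sum)

lemma norm_sq_vec: "(norm (v::complex^'n))^2 = (\<Sum>i\<in>UNIV. (cmod (v$i))^2)"
  by (simp add: norm_vec_def L2_set_def sum_nonneg)

lemma hinner_self: "hinner v v = of_real ((norm (v::complex^'n))^2)"
  by (simp add: norm_sq_vec hinner_def of_real_sum flip: complex_norm_square)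

lemma hinner_self_nz: "v \<noteq> 0 \<Longrightarrow> hinner v v \<noteq> 0"
  by (simp add: hinner_self)

lemma norm_smult: "norm (c *s (v::complex^'n)) = cmod c * norm v"
proof -
  have "norm (c *s v) = L2_set (\<lambda>i. cmod c * cmod (v$i)) UNIV"
    by (simp add: norm_vec_def norm_mult)
  also have "\<dots> = cmod c * norm v"
    by (simp add: norm_vec_def L2_set_right_distrib)
  finally show ?thesis .
qed

lemma orth_proj_line:
  assumes v: "v \<noteq> 0" and L: "L = {c *s v | c. True}"
  shows "orth_proj L x = (hinner x v / hinner v v) *s v"
proof -
  have h: "hinner v v \<noteq> 0" using hinner_self_nz[OF v] .
  let ?p = "(hinner x v / hinner v v) *s v"
  show ?thesis unfolding orth_proj_def
  proof (rule the_equality)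
    show "?p \<in> L \<and> (\<forall>w\<in>L. hinner (x - ?p) w = 0)"
      using h by (auto simp: L hinner_diff hinner_smult hinner_smult2)
  next
    fix p assume p: "p \<in> L \<and> (\<forall>w\<in>L. hinner (x - p) w = 0)"
    then obtain c where c: "p = c *s v" using L by auto
    have "hinner (x - p) v = 0" using p L by (metis (mono_tags, lifting) mem_Collect_eq vector_smult_lid)
    hence "hinner x v = c * hinner v v" by (simp add: c hinner_diff hinner_smult)
    hence "c = hinner x v / hinner v v" using h by (simp add: field_simps)
    thus "p = ?p" using c by simp
  qed
qed

lemma circled_disk:
  fixes S :: "complex set"
  assumes "compact S" "convex S" "z1 \<in> S" "z1 \<noteq> 0"
    and circ: "\<And>\<xi> s. cmod \<xi> = 1 \<Longrightarrow> s \<in> S \<Longrightarrow> \<xi> * s \<in> S"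
  shows "\<exists>\<rho>>0. S = cball 0 \<rho>"
proof -
  obtain z0 where z0: "z0 \<in> S" "\<And>y. y \<in> S \<Longrightarrow> cmod y \<le> cmod z0"
    using continuous_attains_sup[of S cmod] assms(1,3) continuous_on_norm_id by blast
  define \<rho> where "\<rho> = cmod z0"
  have "\<rho> > 0" using z0(2)[OF assms(3)] assms(4) unfolding \<rho>_def by auto
  hence nz: "z0 \<noteq> 0" unfolding \<rho>_def by auto
  have "S = cball 0 \<rho>"
  proof
    show "S \<subseteq> cball 0 \<rho>" using z0 \<rho>_def by (auto simp: dist_norm)
  next
    show "cball 0 \<rho> \<subseteq> S"
    proof
      fix z :: complex assume "z \<in> cball 0 \<rho>"
      hence zr: "cmod z \<le> \<rho>" by (simp add: dist_norm)
      define u where "u = (if z = 0 then 1 else sgn z / sgn z0)"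
      have u1: "cmod u = 1" using nz by (simp add: u_def norm_divide norm_sgn)
      have uz0: "u * z0 = (if z = 0 then z0 else sgn z * of_real \<rho>)"
        using nz by (simp add: u_def \<rho>_def sgn_div_norm scaleR_conv_of_real field_simps)
      have a: "u * z0 \<in> S" using circ[OF u1 z0(1)] .
      have b: "(- u) * z0 \<in> S" using circ[of "-u", OF _ z0(1)] u1 by simp
      define t where "t = (1 + cmod z / \<rho>) / 2"
      have t0: "0 \<le> t" "t \<le> 1" using zr \<open>\<rho> > 0\<close> by (auto simp: t_def field_simps)
      have "t *\<^sub>R (u * z0) + (1 - t) *\<^sub>R ((- u) * z0) \<in> S"
        using convexD[OF assms(2) a b t0(1)] t0 by simp
      moreover have "t *\<^sub>R (u * z0) + (1 - t) *\<^sub>R ((- u) * z0) = z"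
      proof -
        have "t *\<^sub>R (u * z0) + (1 - t) *\<^sub>R ((- u) * z0) = of_real (2*t - 1) * (u * z0)"
          by (simp add: scaleR_conv_of_real algebra_simps)
        also have "2*t - 1 = cmod z / \<rho>" by (simp add: t_def field_simps)
        also have "of_real (cmod z / \<rho>) * (u * z0) = z"
          using \<open>\<rho> > 0\<close> by (cases "z = 0") (simp_all add: uz0 sgn_div_norm scaleR_conv_of_real field_simps)
        finally show ?thesis .
      qed
      ultimately show "z \<in> S" by simp
    qed
  qed
  thus ?thesis using \<open>\<rho> > 0\<close> by blast
qed

lemma linear_hinner: "linear (\<lambda>x. hinner x v / c)"
proof (rule linearI)
  fix r b show "hinner (r *\<^sub>R b) v / c = r *\<^sub>R (hinner b v / c)"
    by (simp only: hinner_scaleR) (simp add: scaleR_conv_of_real)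
qed (simp add: hinner_add add_divide_distrib)

lemma fwd:
  fixes K :: "(complex ^ 'n) set"
  assumes cb: "convex_body K"
    and circ: "\<And>\<xi>. norm \<xi> = 1 \<Longrightarrow>
      (\<lambda>x. \<xi> *s x) ` ((\<lambda>x. x - x0) ` K) = (\<lambda>x. x - x0) ` K"
    and L: "complex_line L"
  shows "origin_disk_in L (orth_proj L ` ((\<lambda>x. x + - x0) ` K))"
proof -
  define K' where "K' = (\<lambda>x. x - x0) ` K"
  have K'eq: "(\<lambda>x. x + - x0) ` K = K'" unfolding K'_def by simp
  obtain v where v: "v \<noteq> 0" "L = {c *s v | c. True}" using L complex_line_def by blast
  have hv: "hinner v v \<noteq> 0" using hinner_self_nz[OF v(1)] .
  define \<phi> where "\<phi> x = hinner x v / hinner v v" for x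
  have lin: "linear \<phi>" unfolding \<phi>_def by (rule linear_hinner)
  have cont: "continuous_on A \<phi>" for A
    using lin linear_conv_bounded_linear linear_continuous_on by blast
  have P: "orth_proj L x = \<phi> x *s v" for x
    using orth_proj_line[OF v] \<phi>_def by simp
  have cK: "compact K" "convex K" "interior K \<noteq> {}" using cb convex_body_def by auto
  have cK': "compact K'" unfolding K'_def
    by (rule compact_continuous_image[OF _ cK(1)]) (intro continuous_intros)
  have vK': "convex K'" unfolding K'_def using convex_translation[OF cK(2), of "-x0"]
    by (simp add: image_image)
  define S where "S = \<phi> ` K'"
  have cS: "compact S" unfolding S_def by (rule compact_continuous_image[OF cont cK'])
  have vS: "convex S" unfolding S_def by (rule convex_linear_image[OF lin vK'])
  have circS: "\<xi> * s \<in> S" if h1: "cmod \<xi> = 1" and h2: "s \<in> S" for \<xi> s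
  proof -
    obtain k where k: "k \<in> K'" "s = \<phi> k" using h2 S_def by auto
    have "\<xi> *s k \<in> K'" using circ[OF h1] k(1) unfolding K'_def by blast
    moreover have "\<phi> (\<xi> *s k) = \<xi> * s" using k by (simp add: \<phi>_def hinner_smult)
    ultimately show ?thesis unfolding S_def by (metis image_eqI)
  qed
  obtain p where "p \<in> interior K" using cK(3) by blast
  then obtain e where e: "e > 0" "ball p e \<subseteq> K" using mem_interior by blast
  define q where "q = p + (e / 2 / norm v) *\<^sub>R v"
  have "dist p q < e" using e v by (simp add: q_def dist_norm)
  hence qK: "q \<in> K" using e by auto
  have pK: "p \<in> K" using e by auto
  have "\<phi> (q - x0) - \<phi> (p - x0) = \<phi> ((e / 2 / norm v) *\<^sub>R v)"
    using linear_diff[OF lin] by (metis add_diff_cancel_left' diff_diff_eq2 diff_add_cancel q_def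
        add_diff_add)
  also have "\<dots> = of_real (e / 2 / norm v)" using hv by (simp add: \<phi>_def hinner_scaleR)
  finally have "\<phi> (q - x0) - \<phi> (p - x0) \<noteq> 0" using e v by simp
  then obtain z1 where z1: "z1 \<in> S" "z1 \<noteq> 0"
    using qK pK unfolding S_def K'_def by (metis image_eqI right_minus_eq)
  obtain \<rho> where rho: "\<rho> > 0" "S = cball 0 \<rho>"
    using circled_disk[OF cS vS z1 circS] by blast
  have "orth_proj L ` K' = {w \<in> L. norm w \<le> \<rho> * norm v}"
  proof
    show "orth_proj L ` K' \<subseteq> {w \<in> L. norm w \<le> \<rho> * norm v}"
    proof
      fix w assume "w \<in> orth_proj L ` K'"
      then obtain k where k: "k \<in> K'" "w = \<phi> k *s v" using P by auto
      have "\<phi> k \<in> cball 0 \<rho>" using k(1) rho(2) S_def by auto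
      hence "cmod (\<phi> k) \<le> \<rho>" by (simp add: dist_norm)
      hence "norm w \<le> \<rho> * norm v" using k(2) by (simp add: norm_smult mult_right_mono)
      thus "w \<in> {w \<in> L. norm w \<le> \<rho> * norm v}" using k(2) v(2) by auto
    qed
  next
    show "{w \<in> L. norm w \<le> \<rho> * norm v} \<subseteq> orth_proj L ` K'"
    proof
      fix w assume w: "w \<in> {w \<in> L. norm w \<le> \<rho> * norm v}"
      then obtain c where c: "w = c *s v" using v(2) by auto
      have "cmod c * norm v \<le> \<rho> * norm v" using w c by (simp add: norm_smult)
      hence "cmod c \<le> \<rho>" using v(1) by simp
      hence "c \<in> S" using rho(2) by (simp add: dist_norm)
      then obtain k where "k \<in> K'" "c = \<phi> k" using S_def by auto
      thus "w \<in> orth_proj L ` K'" using c P by auto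
    qed
  qed
  moreover have "\<rho> * norm v > 0" using rho v by simp
  ultimately show ?thesis unfolding origin_disk_in_def K'eq by blast
qed

lemma bwd_step:
  fixes K' :: "(complex ^ 'n) set"
  assumes cK': "compact K'" "convex K'"
    and disk: "\<And>L. complex_line L \<Longrightarrow> origin_disk_in L (orth_proj L ` K')"
    and y: "y \<in> K'" and xi: "cmod \<xi> = 1"
  shows "\<xi> *s y \<in> K'"
proof (rule ccontr)
  assume nz: "\<xi> *s y \<notin> K'"
  obtain u b where ub: "u \<bullet> (\<xi> *s y) < b" "\<And>x. x \<in> K' \<Longrightarrow> b < u \<bullet> x"
    using separating_hyperplane_closed_point[OF cK'(2) compact_imp_closed[OF cK'(1)] nz] by blast
  show False
  proof (cases "u = 0")
    case True then show ?thesis using ub(1) ub(2)[OF y] by simp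
  next
    case False
    define L where "L = {c *s u | c. True}"
    have cl: "complex_line L" unfolding complex_line_def L_def using False by blast
    have hu: "hinner u u \<noteq> 0" using hinner_self_nz[OF False] .
    have P: "orth_proj L x = (hinner x u / hinner u u) *s u" for x
      using orth_proj_line[OF False L_def] .
    have hP: "hinner (orth_proj L x) u = hinner x u" for x
      using hu by (simp add: P hinner_smult)
    obtain r where r: "orth_proj L ` K' = {w \<in> L. norm w \<le> r}"
      using disk[OF cl] origin_disk_in_def by blast
    have Py: "orth_proj L y \<in> L" "norm (orth_proj L y) \<le> r" using y r by auto
    have Pz: "orth_proj L (\<xi> *s y) = \<xi> *s orth_proj L y"
      by (simp add: P hinner_smult vector_smult_assoc)
    have "orth_proj L (\<xi> *s y) \<in> L" unfolding P by (auto simp: L_def)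
    moreover have "norm (orth_proj L (\<xi> *s y)) \<le> r" using Py(2) xi by (simp add: Pz norm_smult)
    ultimately have "orth_proj L (\<xi> *s y) \<in> orth_proj L ` K'" using r by blast
    then obtain k where k: "k \<in> K'" "orth_proj L k = orth_proj L (\<xi> *s y)" by auto
    have "hinner k u = hinner (\<xi> *s y) u" using hP k(2) by metis
    hence "u \<bullet> k = u \<bullet> (\<xi> *s y)" by (metis inner_commute inner_hinner)
    thus False using ub(1) ub(2)[OF k(1)] by simp
  qed
qed

lemma bwd:
  fixes K :: "(complex ^ 'n) set"
  assumes cb: "convex_body K"
    and disk: "\<And>L. complex_line L \<Longrightarrow> origin_disk_in L (orth_proj L ` ((\<lambda>x. x + a) ` K))"
  shows "csymmetric K"
proof -
  define K' where "K' = (\<lambda>x. x + a) ` K"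
  have cK: "compact K" "convex K" using cb convex_body_def by auto
  have cK': "compact K'" unfolding K'_def
    by (rule compact_continuous_image[OF _ cK(1)]) (intro continuous_intros)
  have vK': "convex K'" unfolding K'_def using convex_translation[OF cK(2), of "a"]
    by (simp add: image_image add.commute)
  have st: "\<xi> *s y \<in> K'" if "y \<in> K'" "cmod \<xi> = 1" for y \<xi>
    using bwd_step[OF cK' vK' disk[folded K'_def] that] .
  have eq: "(\<lambda>x. x - (- a)) ` K = K'" unfolding K'_def by simp
  have "(\<lambda>x. \<xi> *s x) ` K' = K'" if xi: "norm \<xi> = 1" for \<xi>
  proof
    show "(\<lambda>x. \<xi> *s x) ` K' \<subseteq> K'" using st xi by auto
  next
    show "K' \<subseteq> (\<lambda>x. \<xi> *s x) ` K'"
    proof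
      fix x assume x: "x \<in> K'"
      have "cnj \<xi> *s x \<in> K'" using st[OF x] xi by simp
      moreover have "\<xi> *s (cnj \<xi> *s x) = x"
      proof -
        have "\<xi> * cnj \<xi> = 1" using xi complex_norm_square[of \<xi>] by simp
        thus ?thesis by (simp add: vector_smult_assoc)
      qed
      ultimately show "x \<in> (\<lambda>x. \<xi> *s x) ` K'" by (metis image_eqI)
    qed
  qed
  hence "\<forall>\<xi>::complex. norm \<xi> = 1 \<longrightarrow>
      (\<lambda>x. \<xi> *s x) ` ((\<lambda>x. x - (- a)) ` K) = (\<lambda>x. x - (- a)) ` K"
    unfolding eq by blast
  thus ?thesis unfolding csymmetric_def by blast
qed

theorem lemma2p5:
  fixes K :: "(complex ^ 'n) set"
  assumes "convex_body K"
  shows "csymmetric K \<longleftrightarrow>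
    (\<exists>a. \<forall>L. complex_line L \<longrightarrow>
        origin_disk_in L (orth_proj L ` ((\<lambda>x. x + a) ` K)))"
proof
  assume "csymmetric K"
  then obtain x0 where "\<forall>\<xi>::complex. norm \<xi> = 1 \<longrightarrow>
      (\<lambda>x. \<xi> *s x) ` ((\<lambda>x. x - x0) ` K) = (\<lambda>x. x - x0) ` K"
    unfolding csymmetric_def by blast
  thus "\<exists>a. \<forall>L. complex_line L \<longrightarrow>
        origin_disk_in L (orth_proj L ` ((\<lambda>x. x + a) ` K))"
    using fwd[OF assms] by blast
next
  assume "\<exists>a. \<forall>L. complex_line L \<longrightarrow>
        origin_disk_in L (orth_proj L ` ((\<lambda>x. x + a) ` K))"
  thus "csymmetric K" using bwd[OF assms] by blast
qed

end
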